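(* Let $E$ be a finite set and let $\mathcal{W}\subseteq\{+,-,0\}^E$ satisfy (A1), (A2), (A3). Let $N_1,N_2\in\mathcal{P}(\mathcal{W})$ with $\underline{N_1}=\underline{N_2}$ and $N_1\neq N_2$, where $N_1=U+(-U')$ for some $U,U'\in\mathrm{asym}(\mathcal{W})$ with $\underline{U}=\underline{U'}$ and $I(U,-U')\cap\mathcal{W}=I(-U,U')\cap\mathcal{W}=\emptyset$. Let $V=(-N_2)\circ U$. Then the pair $(X,Y)=(U,V)$ does not satisfy all the conditions in the definition of $\mathcal{P}(\mathcal{W})$, i.e. it does not witness that $U+(-V)\in\mathcal{P}(\mathcal{W})$.
   Context: For $X\in\{+,-,0\}^E$: $X^+=\{e:X_e=+\}$, $X^-=\{e:X_e=-\}$, support $\underline{X}=X^+\cup X^-$; $(-X)_e=-X_e$; composition $(X\circ Y)_e=X_e$ if $X_e\neq0$, else $Y_e$; $S(X,Y)=(X^+\cap Y^-)\cup(X^-\cap Y^+)$; $\mathcal{A}\circ\mathcal{B}=\{A\circ B\}$. For $X,Y$ with $\underline{X}=\underline{Y}$, $X\neq Y$, $e\in S(X,Y)$: $I_e(X,Y)=\{V : \underline{V}\subseteq\underline{X}\setminus\{e\}, V_f=X_f\ \forall f\notin S(X,Y)\}$, $I(X,Y)=\bigcup_{e\in S(X,Y)}I_e(X,Y)$. Sum: $(X+Y)_e=0$ if $e\in S(X,Y)$, else $(X\circ Y)_e$. $\mathrm{asym}(\mathcal{W})=\{V\in\mathcal{W}:-V\notin\mathcal{W}\}$; $\mathcal{P}(\mathcal{W})=\{X+(-Y):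 X,Y\in\mathrm{asym}(\mathcal{W}), \underline{X}=\underline{Y}, I(X,-Y)\cap\mathcal{W}=I(-X,Y)\cap\mathcal{W}=\emptyset\}$; a pair $(X,Y)$ witnesses $X+(-Y)\in\mathcal{P}(\mathcal{W})$ if it satisfies all these conditions. Axioms: (A1) $X,Y\in\mathcal{W}\Rightarrow X\circ Y\in\mathcal{W}$ and $X\circ(-Y)\in\mathcal{W}$; (A2) if $X,Y\in\mathcal{W}$ with $\underline{X}=\underline{Y}$ then $I_e(X,Y)\cap\mathcal{W}\neq\emptyset$ for every $e\in S(X,Y)$; (A3) $\mathcal{P}(\mathcal{W})\circ\mathcal{W}\subseteq\mathcal{W}$. *)

theory Defs
  imports Main
begin

text \<open>Sign vectors over a finite ground set E, rendered as the finite type 'e.\<close>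

datatype sign = Pos | Neg | Zero

type_synonym 'e svec = "'e \<Rightarrow> sign"

definition supp :: "'e svec \<Rightarrow> 'e set" where
  "supp X = {e. X e \<noteq> Zero}"

definition sneg :: "'e svec \<Rightarrow> 'e svec" where
  "sneg X = (\<lambda>e. case X e of Pos \<Rightarrow> Neg | Neg \<Rightarrow> Pos | Zero \<Rightarrow> Zero)"

definition comp :: "'e svec \<Rightarrow> 'e svec \<Rightarrow> 'e svec" where
  "comp X Y = (\<lambda>e. if X e \<noteq> Zero then X e else Y e)"

definition sep :: "'e svec \<Rightarrow> 'e svec \<Rightarrow> 'e set" where
  "sep X Y = {e. (X e = Pos \<and> Y e = Neg) \<or> (X e = Neg \<and> Y e = Pos)}"

definition Ie :: "'e svec \<Rightarrow> 'e svec \<Rightarrow> 'e \<Rightarrow> 'e svec set" where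
  "Ie X Y e = {V. supp V \<subseteq> supp X - {e} \<and> (\<forall>f. f \<notin> sep X Y \<longrightarrow> V f = X f)}"

definition Iset :: "'e svec \<Rightarrow> 'e svec \<Rightarrow> 'e svec set" where
  "Iset X Y = (\<Union>e\<in>sep X Y. Ie X Y e)"

definition ssum :: "'e svec \<Rightarrow> 'e svec \<Rightarrow> 'e svec" where
  "ssum X Y = (\<lambda>e. if e \<in> sep X Y then Zero else comp X Y e)"

definition asym :: "'e svec set \<Rightarrow> 'e svec set" where
  "asym W = {V \<in> W. sneg V \<notin> W}"

definition witnesses :: "'e svec set \<Rightarrow> 'e svec \<Rightarrow> 'e svec \<Rightarrow> bool" where
  "witnesses W X Y \<longleftrightarrow> X \<in> asym W \<and> Y \<in> asym W \<and> supp X = supp Y \<and>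
     Iset X (sneg Y) \<inter> W = {} \<and> Iset (sneg X) Y \<inter> W = {}"

definition Pset :: "'e svec set \<Rightarrow> 'e svec set" where
  "Pset W = {ssum X (sneg Y) | X Y. witnesses W X Y}"

definition A1 :: "'e svec set \<Rightarrow> bool" where
  "A1 W \<longleftrightarrow> (\<forall>X\<in>W. \<forall>Y\<in>W. comp X Y \<in> W \<and> comp X (sneg Y) \<in> W)"

definition A2 :: "'e svec set \<Rightarrow> bool" where
  "A2 W \<longleftrightarrow> (\<forall>X\<in>W. \<forall>Y\<in>W. supp X = supp Y \<longrightarrow> (\<forall>e\<in>sep X Y. Ie X Y e \<inter> W \<noteq> {}))"

definition A3 :: "'e svec set \<Rightarrow> bool" where
  "A3 W \<longleftrightarrow> (\<forall>N\<in>Pset W. \<forall>X\<in>W. comp N X \<in> W)"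

end

theory Submission
  imports Defs
begin

theorem lemma4p1:
  fixes W :: "('e::finite) svec set" and N1 N2 U U' :: "'e svec"
  assumes "A1 W" and "A2 W" and "A3 W"
    and "N1 \<in> Pset W" and "N2 \<in> Pset W"
    and "supp N1 = supp N2" and "N1 \<noteq> N2"
    and "U \<in> asym W" and "U' \<in> asym W" and "supp U = supp U'"
    and "Iset U (sneg U') \<inter> W = {}" and "Iset (sneg U) U' \<inter> W = {}"
    and "N1 = ssum U (sneg U')"
  shows "\<not> witnesses W U (comp (sneg N2) U)"
proof
  assume wit: "witnesses W U (comp (sneg N2) U)"
  define V where "V = comp (sneg N2) U"
  have UW: "U \<in> W" using assms(8) by (simp add: asym_def)
  have key: "N1 f \<noteq> Zero \<Longrightarrow> N1 f = U f \<and> U f \<noteq> Zero" for f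
  proof -
    assume h: "N1 f \<noteq> Zero"
    have uu: "(U f = Zero) = (U' f = Zero)" using assms(10)
      by (auto simp: supp_def set_eq_iff)
    show ?thesis using h uu unfolding assms(13) ssum_def comp_def sep_def sneg_def
      by (cases "U f"; cases "U' f"; auto)
  qed
  have n2: "N2 f \<noteq> Zero \<Longrightarrow> N2 f \<noteq> Zero \<and> U f \<noteq> Zero" for f
    using key[of f] assms(6) by (auto simp: supp_def set_eq_iff)
  obtain e where e: "N1 e \<noteq> N2 e" using assms(7) by blast
  have e1: "N1 e \<noteq> Zero" and e2: "N2 e \<noteq> Zero" using e assms(6)
    by (auto simp: supp_def set_eq_iff)
  have eU: "N1 e = U e" "U e \<noteq> Zero" using key[OF e1] by auto
  have eN: "N2 e = sneg U e"
    using eU e e2 by (cases "U e"; cases "N2 e"; auto simp: sneg_def)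
  define M where "M = comp N2 U"
  have MW: "M \<in> W" using assms(3,5) UW by (simp add: A3_def M_def)
  have sM: "supp M = supp U" using n2 by (auto simp: supp_def M_def comp_def)
  have eM: "e \<in> sep M U" using eN eU by (cases "U e"; auto simp: M_def comp_def sep_def sneg_def)
  obtain X where X: "X \<in> Ie M U e" "X \<in> W"
    using assms(2) MW UW sM eM unfolding A2_def by blast
  have eS: "e \<in> sep U (sneg V)"
    using eN eU by (cases "U e"; auto simp: V_def comp_def sep_def sneg_def)
  have "X \<in> Ie U (sneg V) e"
    unfolding Ie_def
  proof (intro CollectI conjI allI impI)
    show "supp X \<subseteq> supp U - {e}" using X(1) sM by (simp add: Ie_def)
    fix f assume f: "f \<notin> sep U (sneg V)"
    have Xf: "f \<notin> sep M U \<Longrightarrow> X f = M f" using X(1) by (simp add: Ie_def)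
    show "X f = U f"
    proof (cases "N2 f = Zero")
      case True
      then show ?thesis using Xf by (cases "U f"; auto simp: M_def comp_def sep_def)
    next
      case False
      then have "U f \<noteq> Zero" using n2 by blast
      then show ?thesis using False f Xf
        by (cases "U f"; cases "N2 f"; auto simp: M_def V_def comp_def sep_def sneg_def)
    qed
  qed
  then have "X \<in> Iset U (sneg V) \<inter> W" using eS X(2) by (auto simp: Iset_def)
  then show False using wit unfolding witnesses_def V_def by blast
qed

end
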